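(* Let $\mathcal{X}=\mathcal{X}_1\times\cdots\times\mathcal{X}_d$, $\sigma>0$, and $\mathcal{Q}:\mathcal{X}\to\mathbb{R}^m$. Define $\Delta=\sup\{\|\mathcal{Q}(u)-\mathcal{Q}(v)\|_2: u,v\in\mathcal{X}\}$ and $\Delta_0=\sup\{\|\mathcal{Q}(u)-\mathcal{Q}(v)\|_2:u,v\in\mathcal{X},\|u-v\|_0\le1\}$. Define $M:\mathcal{X}^n\to\mathbb{R}^m$ as follows: on input $x\in\mathcal{X}^n$, compute $\mathcal{Q}(x)=\frac1n\sum_{i=1}^n\mathcal{Q}(x_i)$, sample $Y\sim\mathcal{N}(\mathcal{Q}(x),\sigma^2I)$, and output $\hat Y=\arg\min_{y\in \mathrm{conv}(\{\mathcal{Q}(u):u\in\mathcal{X}\})}\|y-Y\|_2$. Then $M$ simultaneously satisfies $\frac12\varepsilon^2$-zCDP and $\varepsilon_0$-$\nabla_0$CDP with $\varepsilon=\frac{\Delta}{\sigma n}$ and $\varepsilon_0=\frac{\Delta_0}{\sigma n}$. Furthermore, for all $x\in\mathcal{X}^n$, $$\mathbb{E}\left[\frac1m\|M(x)-\mathcal{Q}(x)\|_2^2\right]\le\min\left\{\sigma^2,\ \frac{\sigma\cdot\Delta\cdot\sqrt{2\log|\mathcal{X}|}}{m}\right\}$$ (where the second term is read as $+\infty$ if $\mathcal{X}$ is infinite).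
   Context: $\mathrm{conv}$ denotes convex hull; $\|u-v\|_0=|\{j\in[d]:u_j\ne v_j\}|$. Rényi divergence $D_\lambda(P\|Q)=\frac{1}{\lambda-1}\log\mathbb{E}_{X\sim P}[(P(X)/Q(X))^{\lambda-1}]$ and $D_*(P\|Q)=\sup_{\lambda>1}\frac1\lambda D_\lambda(P\|Q)$. $M$ is $\frac12\varepsilon^2$-zCDP if $D_*(M(x)\|M(x'))\le\frac12\varepsilon^2$ for all $x,x'\in\mathcal{X}^n$ differing in a single entry. $M$ is $\varepsilon_0$-$\nabla_0$CDP if for all $x,x'\in\mathcal{X}^n$ differing only in entry $i$, $D_*(M(x)\|M(x'))\le\frac12\varepsilon_0^2\|x_i-x'_i\|_0^2$. *)

theory Defs
  imports "HOL-Probability.Probability"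
begin

text \<open>Hamming distance on points of a d-fold product (points are functions on {..<d}).\<close>
definition hamming :: "nat \<Rightarrow> (nat \<Rightarrow> 'a) \<Rightarrow> (nat \<Rightarrow> 'a) \<Rightarrow> nat" where
  "hamming d u v = card {j \<in> {..<d}. u j \<noteq> v j}"

text \<open>Renyi divergence D_lambda(P||Q) (value in ereal; infinite if P is not
  absolutely continuous w.r.t. Q or the moment is infinite). P(X)/Q(X) is the
  Radon-Nikodym derivative dP/dQ = RN_deriv Q P.\<close>
definition renyi_div :: "real \<Rightarrow> 'a measure \<Rightarrow> 'a measure \<Rightarrow> ereal" where
  "renyi_div lam P Q =
     (if absolutely_continuous Q P \<and> sets P = sets Q then
        (let E = (\<integral>\<^sup>+ x. ennreal ((enn2real (RN_deriv Q P x)) powr (lam - 1)) \<partial>P) in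
         if E = \<infinity> then \<infinity> else ereal (ln (enn2real E) / (lam - 1)))
      else \<infinity>)"

definition renyi_star :: "'a measure \<Rightarrow> 'a measure \<Rightarrow> ereal" where
  "renyi_star P Q = (SUP lam \<in> {1<..}. renyi_div lam P Q / ereal lam)"

text \<open>Neighbouring datasets in X^n (datasets are functions on {..<n}).\<close>
definition neighbours :: "nat \<Rightarrow> nat \<Rightarrow> (nat \<Rightarrow> 'b) \<Rightarrow> (nat \<Rightarrow> 'b) \<Rightarrow> bool" where
  "neighbours n i x x' \<longleftrightarrow> i < n \<and> (\<forall>j<n. j \<noteq> i \<longrightarrow> x j = x' j)"

definition zCDP :: "'b set \<Rightarrow> nat \<Rightarrow> ((nat \<Rightarrow> 'b) \<Rightarrow> 'c measure) \<Rightarrow> ereal \<Rightarrow> bool" where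
  "zCDP X n M eps \<longleftrightarrow>
     (\<forall>x \<in> PiE {..<n} (\<lambda>_. X). \<forall>x' \<in> PiE {..<n} (\<lambda>_. X). \<forall>i.
        neighbours n i x x' \<longrightarrow> renyi_star (M x) (M x') \<le> ereal (1/2) * eps ^ 2)"

definition nabla0CDP :: "nat \<Rightarrow> (nat \<Rightarrow> 'a) set \<Rightarrow> nat \<Rightarrow> ((nat \<Rightarrow> (nat \<Rightarrow> 'a)) \<Rightarrow> 'c measure)
     \<Rightarrow> ereal \<Rightarrow> bool" where
  "nabla0CDP d X n M eps0 \<longleftrightarrow>
     (\<forall>x \<in> PiE {..<n} (\<lambda>_. X). \<forall>x' \<in> PiE {..<n} (\<lambda>_. X). \<forall>i.
        neighbours n i x x' \<longrightarrow>
          renyi_star (M x) (M x') \<le> ereal (1/2) * eps0 ^ 2 * ereal (real (hamming d (x i) (x' i)) ^ 2))"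

definition gauss_measure :: "real^'m \<Rightarrow> real \<Rightarrow> (real^'m) measure" where
  "gauss_measure mu \<sigma> = density lborel (\<lambda>y. ennreal (\<Prod>i\<in>UNIV. normal_density (mu $ i) \<sigma> (y $ i)))"

definition avgQ :: "('b \<Rightarrow> real^'m) \<Rightarrow> nat \<Rightarrow> (nat \<Rightarrow> 'b) \<Rightarrow> real^'m" where
  "avgQ Q n x = (1 / real n) *\<^sub>R (\<Sum>i<n. Q (x i))"

definition proj_gauss_mech :: "'b set \<Rightarrow> ('b \<Rightarrow> real^'m) \<Rightarrow> real \<Rightarrow> nat \<Rightarrow> (nat \<Rightarrow> 'b) \<Rightarrow> (real^'m) measure" where
  "proj_gauss_mech X Q \<sigma> n x =
     distr (gauss_measure (avgQ Q n x) \<sigma>) borel (closest_point (closure (convex hull (Q ` X))))"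

definition sens :: "'b set \<Rightarrow> ('b \<Rightarrow> real^'m) \<Rightarrow> ereal" where
  "sens X Q = Sup {ereal (norm (Q u - Q v)) | u v. u \<in> X \<and> v \<in> X}"

definition sens0 :: "nat \<Rightarrow> (nat \<Rightarrow> 'a) set \<Rightarrow> ((nat \<Rightarrow> 'a) \<Rightarrow> real^'m) \<Rightarrow> ereal" where
  "sens0 d X Q = Sup {ereal (norm (Q u - Q v)) | u v. u \<in> X \<and> v \<in> X \<and> hamming d u v \<le> 1}"

end

theory Submission
  imports Defs
begin


lemma nd_nn_int: assumes "\<sigma> > 0"
  shows "(\<integral>\<^sup>+x. ennreal (normal_density a \<sigma> x) \<partial>lborel) = 1"
  using assms by (subst nn_integral_eq_integral) (auto simp: integrable_normal_density)

lemma nd_nn_int_cmult: assumes "\<sigma> > 0" "K \<ge> 0"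
  shows "(\<integral>\<^sup>+x. ennreal (K * normal_density a \<sigma> x) \<partial>lborel) = ennreal K"
proof -
  have "(\<integral>\<^sup>+x. ennreal (K * normal_density a \<sigma> x) \<partial>lborel) = (\<integral>\<^sup>+x. ennreal K * ennreal (normal_density a \<sigma> x) \<partial>lborel)"
    using assms by (simp add: ennreal_mult)
  also have "\<dots> = ennreal K * (\<integral>\<^sup>+x. ennreal (normal_density a \<sigma> x) \<partial>lborel)"
    by (rule nn_integral_cmult) auto
  finally show ?thesis using nd_nn_int[OF assms(1)] by simp
qed

lemma nd_mgf_identity: assumes "\<sigma> > 0"
  shows "exp (s * (x - a)) * normal_density a \<sigma> x = exp (s^2 * \<sigma>^2 / 2) * normal_density (a + s * \<sigma>^2) \<sigma> x"
proof -
  have "s * (x - a) + (-(x - a)\<^sup>2/ (2 * \<sigma>\<^sup>2)) = s^2 * \<sigma>^2 / 2 + (-(x - (a + s * \<sigma>^2))\<^sup>2/ (2 * \<sigma>\<^sup>2))"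
    using assms by (simp add: field_simps power2_eq_square)
  then have "exp (s * (x - a)) * exp (-(x - a)\<^sup>2/ (2 * \<sigma>\<^sup>2)) = exp (s^2 * \<sigma>^2 / 2) * exp (-(x - (a + s * \<sigma>^2))\<^sup>2/ (2 * \<sigma>\<^sup>2))"
    by (simp add: exp_add[symmetric])
  then show ?thesis unfolding normal_density_def by (metis (no_types, lifting) mult.left_commute)
qed

lemma nd_mgf: assumes "\<sigma> > 0"
  shows "(\<integral>\<^sup>+x. ennreal (exp (s * (x - a)) * normal_density a \<sigma> x) \<partial>lborel) = ennreal (exp (s^2 * \<sigma>^2 / 2))"
  unfolding nd_mgf_identity[OF assms] by (rule nd_nn_int_cmult[OF assms]) simp

lemma nd_var: assumes "\<sigma> > 0"
  shows "(\<integral>\<^sup>+x. ennreal ((x - a)^2 * normal_density a \<sigma> x) \<partial>lborel) = ennreal (\<sigma>^2)"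
proof -
  have "integrable lborel (\<lambda>x. normal_density a \<sigma> x * (x - a)^2)"
    using integrable_normal_moment[OF assms] .
  moreover have "integral\<^sup>L lborel (\<lambda>x. normal_density a \<sigma> x * (x - a)^(2*1)) = \<sigma>^2"
    using integral_normal_moment_even[OF assms, of a 1] by simp
  ultimately show ?thesis
    by (subst nn_integral_eq_integral) (auto simp: mult.commute)
qed

lemma nd_renyi_identity: assumes "\<sigma> > 0"
  shows "normal_density a \<sigma> x powr l * normal_density b \<sigma> x powr (1 - l)
    = exp (l * (l - 1) * (a - b)^2 / (2 * \<sigma>^2)) * normal_density (l * a + (1 - l) * b) \<sigma> x"
proof -
  define C where "C = 1 / sqrt (2 * pi * \<sigma>\<^sup>2)"
  have C: "C > 0" using assms by (simp add: C_def)
  have nd: "normal_density c \<sigma> x = C * exp (-(x - c)\<^sup>2/ (2 * \<sigma>\<^sup>2))" for c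
    by (simp add: normal_density_def C_def)
  have e: "exp t powr r = exp (r * t)" for t r :: real
    by (simp add: powr_def ln_exp)
  have "normal_density a \<sigma> x powr l * normal_density b \<sigma> x powr (1 - l)
     = (C powr l * C powr (1 - l)) * (exp (l * (-(x - a)\<^sup>2/ (2 * \<sigma>\<^sup>2))) * exp ((1 - l) * (-(x - b)\<^sup>2/ (2 * \<sigma>\<^sup>2))))"
    unfolding nd using C by (simp add: powr_mult e)
  also have "C powr l * C powr (1 - l) = C"
    using C by (simp add: powr_add[symmetric])
  also have "exp (l * (-(x - a)\<^sup>2/ (2 * \<sigma>\<^sup>2))) * exp ((1 - l) * (-(x - b)\<^sup>2/ (2 * \<sigma>\<^sup>2)))
     = exp (l * (l - 1) * (a - b)^2 / (2 * \<sigma>^2)) * exp (-(x - (l * a + (1 - l) * b))\<^sup>2/ (2 * \<sigma>\<^sup>2))"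
  proof -
    have "l * (-(x - a)\<^sup>2/ (2 * \<sigma>\<^sup>2)) + (1 - l) * (-(x - b)\<^sup>2/ (2 * \<sigma>\<^sup>2))
      = l * (l - 1) * (a - b)^2 / (2 * \<sigma>^2) + (-(x - (l * a + (1 - l) * b))\<^sup>2/ (2 * \<sigma>\<^sup>2))"
      using assms by (simp add: field_simps power2_eq_square)
    then show ?thesis by (simp add: exp_add[symmetric])
  qed
  finally show ?thesis unfolding nd by (simp add: ac_simps)
qed

lemma nd_renyi: assumes "\<sigma> > 0"
  shows "(\<integral>\<^sup>+x. ennreal (normal_density a \<sigma> x powr l * normal_density b \<sigma> x powr (1 - l)) \<partial>lborel)
    = ennreal (exp (l * (l - 1) * (a - b)^2 / (2 * \<sigma>^2)))"
  unfolding nd_renyi_identity[OF assms] by (rule nd_nn_int_cmult[OF assms]) simp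



lemma vec_lborel_prod:
  fixes h :: "'m::finite \<Rightarrow> real \<Rightarrow> real"
  assumes [measurable]: "\<And>i. h i \<in> borel_measurable borel"
  assumes nn: "\<And>i x. 0 \<le> h i x"
  shows "(\<integral>\<^sup>+y. ennreal (\<Prod>i\<in>UNIV. h i (y $ i)) \<partial>(lborel::(real^'m) measure)) = (\<Prod>i\<in>UNIV. (\<integral>\<^sup>+x. ennreal (h i x) \<partial>lborel))"
proof -
  define f where "f b x = ennreal (h (SOME i. b = axis i (1::real)) x)" for b :: "real^'m" and x
  have fa: "f (axis i 1) = (\<lambda>x. ennreal (h i x))" for i
    unfolding f_def by (intro ext arg_cong[where f=ennreal] fun_cong[where f=h] arg_cong[where f=h]) (metis (mono_tags, lifting) axis_eq_axis someI zero_neq_one)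
  have inj: "inj (\<lambda>i::'m. axis i (1::real))"
    by (auto simp: inj_def axis_eq_axis)
  have B: "(Basis :: (real^'m) set) = range (\<lambda>i. axis i 1)"
    by (auto simp: Basis_vec_def)
  have "\<And>y::real^'m. ennreal (\<Prod>i\<in>UNIV. h i (y $ i)) = (\<Prod>b\<in>Basis. f b (y \<bullet> b))"
    unfolding B by (subst prod.reindex[OF inj]) (simp add: fa inner_axis prod_ennreal nn)
  moreover have "(\<Prod>i\<in>UNIV. (\<integral>\<^sup>+x. ennreal (h i x) \<partial>lborel)) = (\<Prod>b\<in>(Basis::(real^'m) set). (\<integral>\<^sup>+x. f b x \<partial>lborel))"
    unfolding B by (subst prod.reindex[OF inj]) (simp add: fa)
  moreover have "(\<integral>\<^sup>+y. (\<Prod>b\<in>Basis. f b (y \<bullet> b)) \<partial>(lborel::(real^'m) measure)) = (\<Prod>b\<in>(Basis::(real^'m) set). (\<integral>\<^sup>+x. f b x \<partial>lborel))"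
    by (rule nn_integral_lborel_prod) (auto simp: f_def nn)
  ultimately show ?thesis by simp
qed


definition ndv :: "real^'m \<Rightarrow> real \<Rightarrow> real^'m \<Rightarrow> real" where
  "ndv mu \<sigma> y = (\<Prod>i\<in>UNIV. normal_density (mu $ i) \<sigma> (y $ i))"

lemma ndv_pos: "\<sigma> > 0 \<Longrightarrow> ndv mu \<sigma> y > 0"
  unfolding ndv_def by (intro prod_pos) (auto intro: normal_density_pos)

lemma ndv_meas[measurable]: "ndv mu \<sigma> \<in> borel_measurable borel"
  unfolding ndv_def by measurable

lemma gauss_measure_ndv: "gauss_measure mu \<sigma> = density lborel (\<lambda>y. ennreal (ndv mu \<sigma> y))"
  unfolding gauss_measure_def ndv_def ..

lemma nn_int_gauss: "f \<in> borel_measurable borel \<Longrightarrow>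
  (\<integral>\<^sup>+y. f y \<partial>gauss_measure mu \<sigma>) = (\<integral>\<^sup>+y. ennreal (ndv mu \<sigma> y) * f y \<partial>lborel)"
  unfolding gauss_measure_ndv by (subst nn_integral_density) auto

lemma sets_gauss[simp, measurable_cong]: "sets (gauss_measure mu \<sigma>) = sets borel"
  unfolding gauss_measure_def by simp

lemma space_gauss[simp]: "space (gauss_measure mu \<sigma>) = UNIV"
  unfolding gauss_measure_def by simp

lemma ndv_int: assumes "\<sigma> > 0"
  shows "(\<integral>\<^sup>+y. ennreal (ndv mu \<sigma> y) \<partial>lborel) = 1"
  unfolding ndv_def by (subst vec_lborel_prod) (auto simp: nd_nn_int[OF assms])

lemma prob_gauss: assumes "\<sigma> > 0" shows "prob_space (gauss_measure mu \<sigma>)"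
proof
  show "emeasure (gauss_measure mu \<sigma>) (space (gauss_measure mu \<sigma>)) = 1"
    unfolding gauss_measure_ndv using ndv_int[OF assms]
    by (subst emeasure_density) auto
qed

lemma gauss_var: fixes mu :: "real^'m::finite" assumes "\<sigma> > 0"
  shows "(\<integral>\<^sup>+y. ennreal ((norm (y - mu))^2) \<partial>gauss_measure mu \<sigma>) = ennreal (real CARD('m) * \<sigma>^2)"
    (is "?L = _")
proof -
  have n2: "(norm (y - mu))^2 = (\<Sum>i\<in>UNIV. (y $ i - mu $ i)^2)" for y :: "real^'m"
    by (simp add: norm_vec_def L2_set_def sum_nonneg)
  have "?L = (\<integral>\<^sup>+y. (\<Sum>i\<in>UNIV. ennreal ((y $ i - mu $ i)^2 * ndv mu \<sigma> y)) \<partial>lborel)"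
    apply (subst nn_int_gauss, measurable)
    apply (rule nn_integral_cong)
  proof -
    fix y :: "real^'m"
    have p: "0 \<le> ndv mu \<sigma> y" using ndv_pos[OF assms] less_imp_le by blast
    have "ennreal (ndv mu \<sigma> y) * ennreal ((norm (y - mu))^2) = ennreal (ndv mu \<sigma> y * (norm (y - mu))^2)"
      using p by (simp add: ennreal_mult)
    also have "\<dots> = ennreal (\<Sum>i\<in>UNIV. (y $ i - mu $ i)^2 * ndv mu \<sigma> y)"
      by (simp add: n2 sum_distrib_left ac_simps)
    also have "\<dots> = (\<Sum>i\<in>UNIV. ennreal ((y $ i - mu $ i)^2 * ndv mu \<sigma> y))"
      using p by (subst sum_ennreal[symmetric]) auto
    finally show "ennreal (ndv mu \<sigma> y) * ennreal ((norm (y - mu))^2) = (\<Sum>i\<in>UNIV. ennreal ((y $ i - mu $ i)^2 * ndv mu \<sigma> y))" .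
  qed
  also have "\<dots> = (\<Sum>i\<in>UNIV. (\<integral>\<^sup>+y. ennreal ((y $ i - mu $ i)^2 * ndv mu \<sigma> y) \<partial>lborel))"
    by (rule nn_integral_sum) auto
  also have "\<dots> = (\<Sum>i\<in>(UNIV::'m set). ennreal (\<sigma>^2))"
  proof (rule sum.cong[OF refl])
    fix i :: 'm
    define h where "h j x = (if j = i then (x - mu $ i)^2 * normal_density (mu $ i) \<sigma> x else normal_density (mu $ j) \<sigma> x)" for j x
    have "(y $ i - mu $ i)^2 * ndv mu \<sigma> y = (\<Prod>j\<in>UNIV. h j (y $ j))" for y
      unfolding ndv_def h_def
      by (simp add: prod.If_cases Int_absorb1 Diff_eq[symmetric] prod.remove[of UNIV i, simplified])
    then have "(\<integral>\<^sup>+y. ennreal ((y $ i - mu $ i)^2 * ndv mu \<sigma> y) \<partial>lborel) = (\<integral>\<^sup>+y. ennreal (\<Prod>j\<in>UNIV. h j (y $ j)) \<partial>lborel)"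
      by simp
    also have "\<dots> = (\<Prod>j\<in>UNIV. (\<integral>\<^sup>+x. ennreal (h j x) \<partial>lborel))"
      by (rule vec_lborel_prod) (auto simp: h_def)
    also have "\<dots> = (\<Prod>j\<in>UNIV. (if j = i then ennreal (\<sigma>^2) else 1))"
      by (intro prod.cong refl) (simp add: h_def nd_var[OF assms] nd_nn_int[OF assms])
    also have "\<dots> = ennreal (\<sigma>^2)" by simp
    finally show "(\<integral>\<^sup>+y. ennreal ((y $ i - mu $ i)^2 * ndv mu \<sigma> y) \<partial>lborel) = ennreal (\<sigma>^2)" .
  qed
  also have "\<dots> = ennreal (real CARD('m) * \<sigma>^2)"
    by (simp add: ennreal_mult' ennreal_of_nat_eq_real_of_nat)
  finally show ?thesis .
qed

lemma norm2_vec: "(norm (x::real^'m::finite))^2 = (\<Sum>i\<in>UNIV. (x $ i)^2)"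
  by (simp add: norm_vec_def L2_set_def sum_nonneg)

lemma gauss_mgf: fixes mu a :: "real^'m::finite" assumes "\<sigma> > 0"
  shows "(\<integral>\<^sup>+y. ennreal (exp (t * inner a (y - mu))) \<partial>gauss_measure mu \<sigma>) = ennreal (exp (t^2 * \<sigma>^2 * (norm a)^2 / 2))"
proof -
  have "(\<integral>\<^sup>+y. ennreal (exp (t * inner a (y - mu))) \<partial>gauss_measure mu \<sigma>)
     = (\<integral>\<^sup>+y. ennreal (\<Prod>j\<in>UNIV. exp ((t * a $ j) * (y $ j - mu $ j)) * normal_density (mu $ j) \<sigma> (y $ j)) \<partial>lborel)"
    apply (subst nn_int_gauss, measurable)
    apply (rule nn_integral_cong)
  proof -
    fix y :: "real^'m"
    have p: "0 \<le> ndv mu \<sigma> y" using ndv_pos[OF assms] less_imp_le by blast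
    have "ennreal (ndv mu \<sigma> y) * ennreal (exp (t * inner a (y - mu))) = ennreal (ndv mu \<sigma> y * exp (t * inner a (y - mu)))"
      using p by (simp add: ennreal_mult)
    also have "ndv mu \<sigma> y * exp (t * inner a (y - mu)) = (\<Prod>j\<in>UNIV. exp ((t * a $ j) * (y $ j - mu $ j)) * normal_density (mu $ j) \<sigma> (y $ j))"
      by (simp add: ndv_def inner_vec_def sum_distrib_left exp_sum prod.distrib ac_simps)
    finally show "ennreal (ndv mu \<sigma> y) * ennreal (exp (t * inner a (y - mu))) = ennreal (\<Prod>j\<in>UNIV. exp ((t * a $ j) * (y $ j - mu $ j)) * normal_density (mu $ j) \<sigma> (y $ j))" .
  qed
  also have "\<dots> = (\<Prod>j\<in>UNIV. (\<integral>\<^sup>+x. ennreal (exp ((t * a $ j) * (x - mu $ j)) * normal_density (mu $ j) \<sigma> x) \<partial>lborel))"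
    by (rule vec_lborel_prod) auto
  also have "\<dots> = (\<Prod>j\<in>UNIV. ennreal (exp ((t * a $ j)^2 * \<sigma>^2 / 2)))"
    by (simp add: nd_mgf[OF assms])
  also have "\<dots> = ennreal (exp (t^2 * \<sigma>^2 * (norm a)^2 / 2))"
    by (simp add: prod_ennreal exp_sum[symmetric] norm2_vec sum_divide_distrib sum_distrib_left power_mult_distrib ac_simps)
  finally show ?thesis .
qed

lemma ndv_renyi: fixes a b :: "real^'m::finite" assumes "\<sigma> > 0"
  shows "(\<integral>\<^sup>+y. ennreal (ndv a \<sigma> y powr l * ndv b \<sigma> y powr (1 - l)) \<partial>lborel)
    = ennreal (exp (l * (l - 1) * (norm (a - b))^2 / (2 * \<sigma>^2)))"
proof -
  have "(\<integral>\<^sup>+y. ennreal (ndv a \<sigma> y powr l * ndv b \<sigma> y powr (1 - l)) \<partial>lborel)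
     = (\<integral>\<^sup>+y. ennreal (\<Prod>j\<in>UNIV. normal_density (a $ j) \<sigma> (y $ j) powr l * normal_density (b $ j) \<sigma> (y $ j) powr (1 - l)) \<partial>lborel)"
    by (simp add: ndv_def prod_powr_distrib prod.distrib)
  also have "\<dots> = (\<Prod>j\<in>UNIV. (\<integral>\<^sup>+x. ennreal (normal_density (a $ j) \<sigma> x powr l * normal_density (b $ j) \<sigma> x powr (1 - l)) \<partial>lborel))"
    by (rule vec_lborel_prod) auto
  also have "\<dots> = (\<Prod>j\<in>UNIV. ennreal (exp (l * (l - 1) * (a $ j - b $ j)^2 / (2 * \<sigma>^2))))"
    by (simp add: nd_renyi[OF assms])
  also have "\<dots> = ennreal (exp (l * (l - 1) * (norm (a - b))^2 / (2 * \<sigma>^2)))"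
    by (simp add: prod_ennreal exp_sum[symmetric] norm2_vec sum_divide_distrib sum_distrib_left ac_simps)
  finally show ?thesis .
qed



lemma dpi_trunc:
  fixes Qm :: "'a measure" and N :: "'b measure" and T :: "'a \<Rightarrow> 'b" and f :: "'a \<Rightarrow> real" and G :: "'b \<Rightarrow> real"
  assumes ps: "prob_space Qm" and l: "l > 1"
    and [measurable]: "f \<in> borel_measurable Qm" "T \<in> measurable Qm N" "G \<in> borel_measurable N"
    and fnn: "\<And>y. f y \<ge> 0" and Gnn: "\<And>z. G z \<ge> 0"
    and key: "\<And>h. h \<in> borel_measurable N \<Longrightarrow>
       (\<integral>\<^sup>+y. h (T y) * ennreal (f y) \<partial>Qm) = (\<integral>\<^sup>+y. h (T y) * ennreal (G (T y)) \<partial>Qm)"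
    and kpos: "k > 0"
  shows "(\<integral>\<^sup>+y. ennreal (min (G (T y)) k powr l) \<partial>Qm) \<le> (\<integral>\<^sup>+y. ennreal (f y powr l) \<partial>Qm)"
proof -
  interpret prob_space Qm by fact
  define Gk where "Gk y = min (G (T y)) k" for y
  have Gk_nn: "Gk y \<ge> 0" for y using Gnn kpos by (simp add: Gk_def)
  have [measurable]: "Gk \<in> borel_measurable Qm" unfolding Gk_def by measurable
  define B where "B = (\<integral>\<^sup>+y. ennreal (Gk y powr l) \<partial>Qm)"
  define A where "A = (\<integral>\<^sup>+y. ennreal (f y powr l) \<partial>Qm)"
  have Bfin: "B \<le> ennreal (k powr l)"
  proof -
    have "B \<le> (\<integral>\<^sup>+y. ennreal (k powr l) \<partial>Qm)"
      unfolding B_def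
      by (intro nn_integral_mono ennreal_leI powr_mono2) (use l Gk_nn in \<open>auto simp: Gk_def\<close>)
    also have "\<dots> = ennreal (k powr l)" by (simp add: emeasure_space_1)
    finally show ?thesis .
  qed
  have "B \<le> (\<integral>\<^sup>+y. ennreal (Gk y powr (l - 1)) * ennreal (G (T y)) \<partial>Qm)"
    unfolding B_def
  proof (intro nn_integral_mono)
    fix y
    have "Gk y powr l = Gk y powr (l - 1) * Gk y"
      using Gk_nn[of y] by (cases "Gk y = 0") (use powr_add[of "Gk y" "l - 1" 1] in auto)
    also have "\<dots> \<le> Gk y powr (l - 1) * G (T y)"
      by (intro mult_left_mono) (auto simp: Gk_def)
    finally show "ennreal (Gk y powr l) \<le> ennreal (Gk y powr (l - 1)) * ennreal (G (T y))"
      using Gnn[of "T y"] by (subst ennreal_mult[symmetric]) (auto intro: ennreal_leI)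
  qed
  also have "\<dots> = (\<integral>\<^sup>+y. ennreal (Gk y powr (l - 1)) * ennreal (f y) \<partial>Qm)"
    using key[of "\<lambda>z. ennreal (min (G z) k powr (l - 1))"] by (simp add: Gk_def)
  also have "\<dots> \<le> (\<integral>\<^sup>+y. ennreal (f y powr l / l) + ennreal (Gk y powr l * ((l - 1) / l)) \<partial>Qm)"
  proof (intro nn_integral_mono)
    fix y
    have q: "1 / l + 1 / (l / (l - 1)) = 1" "l / (l - 1) > 1" using l by (auto simp: field_simps)
    have "(Gk y powr (l - 1)) * f y \<le> f y powr l / l + (Gk y powr (l - 1)) powr (l / (l - 1)) / (l / (l - 1))"
      using Youngs_inequality[of l "l / (l - 1)" "f y" "Gk y powr (l - 1)"] q l fnn[of y]
      by (simp add: mult.commute)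
    also have "(Gk y powr (l - 1)) powr (l / (l - 1)) = Gk y powr l"
      using l Gk_nn[of y] by (simp add: powr_powr)
    finally have "(Gk y powr (l - 1)) * f y \<le> f y powr l / l + Gk y powr l * ((l - 1) / l)"
      by (simp add: field_simps)
    then show "ennreal (Gk y powr (l - 1)) * ennreal (f y) \<le> ennreal (f y powr l / l) + ennreal (Gk y powr l * ((l - 1) / l))"
      using l fnn[of y] by (simp add: ennreal_mult[symmetric] ennreal_plus[symmetric] del: ennreal_plus)
  qed
  also have "\<dots> = (\<integral>\<^sup>+y. ennreal (f y powr l / l) \<partial>Qm) + (\<integral>\<^sup>+y. ennreal (Gk y powr l * ((l - 1) / l)) \<partial>Qm)"
    by (rule nn_integral_add) auto
  also have "(\<integral>\<^sup>+y. ennreal (f y powr l / l) \<partial>Qm) = A * ennreal (1 / l)"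
    unfolding A_def using l
    by (subst nn_integral_multc[symmetric]) (auto simp: ennreal_mult[symmetric] divide_inverse)
  also have "(\<integral>\<^sup>+y. ennreal (Gk y powr l * ((l - 1) / l)) \<partial>Qm) = B * ennreal ((l - 1) / l)"
    unfolding B_def using l
    by (subst nn_integral_multc[symmetric]) (auto simp: ennreal_mult[symmetric])
  finally have ineq: "B \<le> A * ennreal (1 / l) + B * ennreal ((l - 1) / l)" .
  show ?thesis
  proof (cases "A = \<infinity>")
    case True then show ?thesis by (simp add: A_def)
  next
    case False
    obtain a where a: "A = ennreal a" "a \<ge> 0" using False by (cases A) auto
    obtain b where b: "B = ennreal b" "b \<ge> 0" using Bfin by (cases B) (auto simp: top_unique)
    have "b \<le> a * (1 / l) + b * ((l - 1) / l)"
      using ineq l a b by (simp add: ennreal_mult[symmetric] ennreal_plus[symmetric] del: ennreal_plus)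
    then have "b \<le> a" using l by (simp add: field_simps)
    then show ?thesis using a b by (simp add: A_def B_def Gk_def)
  qed
qed


lemma sup_trunc: assumes "g \<ge> 0" "l > 0"
  shows "(SUP n. ennreal (min g (real (Suc n)) powr l)) = ennreal (g powr l)"
proof (rule antisym)
  show "(SUP n. ennreal (min g (real (Suc n)) powr l)) \<le> ennreal (g powr l)"
    using assms by (intro SUP_least ennreal_leI powr_mono2) auto
  obtain n :: nat where n: "g \<le> real n" using real_arch_simple by blast
  then have "min g (real (Suc n)) = g" by simp
  then have "ennreal (g powr l) = ennreal (min g (real (Suc n)) powr l)" by simp
  also have "\<dots> \<le> (SUP n. ennreal (min g (real (Suc n)) powr l))"
    by (rule SUP_upper) simp
  finally show "ennreal (g powr l) \<le> (SUP n. ennreal (min g (real (Suc n)) powr l))" .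
qed

lemma dpi:
  fixes Qm :: "'a measure" and N :: "'b measure" and T :: "'a \<Rightarrow> 'b" and f :: "'a \<Rightarrow> real" and G :: "'b \<Rightarrow> real"
  assumes ps: "prob_space Qm" and l: "l > 1"
    and [measurable]: "f \<in> borel_measurable Qm" "T \<in> measurable Qm N" "G \<in> borel_measurable N"
    and fnn: "\<And>y. f y \<ge> 0" and Gnn: "\<And>z. G z \<ge> 0"
    and key: "\<And>h. h \<in> borel_measurable N \<Longrightarrow>
       (\<integral>\<^sup>+y. h (T y) * ennreal (f y) \<partial>Qm) = (\<integral>\<^sup>+y. h (T y) * ennreal (G (T y)) \<partial>Qm)"
  shows "(\<integral>\<^sup>+y. ennreal (G (T y) powr l) \<partial>Qm) \<le> (\<integral>\<^sup>+y. ennreal (f y powr l) \<partial>Qm)"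
proof -
  have "(\<integral>\<^sup>+y. ennreal (G (T y) powr l) \<partial>Qm) = (\<integral>\<^sup>+y. (SUP n. ennreal (min (G (T y)) (real (Suc n)) powr l)) \<partial>Qm)"
    using Gnn l by (intro nn_integral_cong) (simp only: sup_trunc)
  also have "\<dots> = (SUP n. (\<integral>\<^sup>+y. ennreal (min (G (T y)) (real (Suc n)) powr l) \<partial>Qm))"
  proof (rule nn_integral_monotone_convergence_SUP)
    show "incseq (\<lambda>n y. ennreal (min (G (T y)) (real (Suc n)) powr l))"
      unfolding incseq_def le_fun_def
    proof (intro allI impI ennreal_leI powr_mono2)
      fix m n :: nat and y assume "m \<le> n"
      then show "min (G (T y)) (real (Suc m)) \<le> min (G (T y)) (real (Suc n))" by auto
    qed (use Gnn l in auto)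
  next
    fix n show "(\<lambda>y. ennreal (min (G (T y)) (real (Suc n)) powr l)) \<in> borel_measurable Qm"
      by measurable
  qed
  also have "\<dots> \<le> (\<integral>\<^sup>+y. ennreal (f y powr l) \<partial>Qm)"
  proof (rule SUP_least)
    fix n :: nat
    show "(\<integral>\<^sup>+y. ennreal (min (G (T y)) (real (Suc n)) powr l) \<partial>Qm) \<le> (\<integral>\<^sup>+y. ennreal (f y powr l) \<partial>Qm)"
      by (rule dpi_trunc[OF ps l assms(3,4,5) fnn Gnn key]) auto
  qed
  finally show ?thesis .
qed



lemma cp_meas:
  assumes "convex K" "closed K" "K \<noteq> {}"
  shows "closest_point K \<in> borel_measurable (borel :: ('a::euclidean_space) measure)"
  by (rule borel_measurable_continuous_onI) (rule continuous_on_closest_point[OF assms])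

lemma null_gauss: assumes "\<sigma> > 0"
  shows "null_sets (gauss_measure mu \<sigma>) = null_sets lborel"
proof -
  have "A \<in> null_sets (gauss_measure mu \<sigma>) \<longleftrightarrow> A \<in> null_sets lborel" for A
  proof -
    have "A \<in> null_sets (gauss_measure mu \<sigma>) \<longleftrightarrow> A \<in> sets lborel \<and> (AE x in lborel. x \<in> A \<longrightarrow> ennreal (ndv mu \<sigma> x) = 0)"
      unfolding gauss_measure_ndv by (rule null_sets_density_iff) measurable
    also have "\<dots> \<longleftrightarrow> A \<in> sets lborel \<and> (AE x in lborel. x \<notin> A)"
    proof -
      have "\<And>x. (x \<in> A \<longrightarrow> ennreal (ndv mu \<sigma> x) = 0) \<longleftrightarrow> x \<notin> A"
        using ndv_pos[OF assms, of mu] by (metis ennreal_eq_0_iff not_less)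
      then show ?thesis by simp
    qed
    also have "\<dots> \<longleftrightarrow> A \<in> null_sets lborel"
      by (metis AE_iff_null_sets null_setsD2)
    finally show ?thesis .
  qed
  then show ?thesis by blast
qed


lemma ndv_ratio_powr: assumes "\<sigma> > 0"
  shows "ndv b \<sigma> y * (ndv a \<sigma> y / ndv b \<sigma> y) powr l = ndv a \<sigma> y powr l * ndv b \<sigma> y powr (1 - l)"
proof -
  have pa: "ndv a \<sigma> y > 0" and pb: "ndv b \<sigma> y > 0" using ndv_pos[OF assms] by auto
  have "ndv b \<sigma> y * (ndv a \<sigma> y / ndv b \<sigma> y) powr l = ndv a \<sigma> y powr l * (ndv b \<sigma> y / ndv b \<sigma> y powr l)"
    using pa pb by (simp add: powr_divide)
  also have "ndv b \<sigma> y / ndv b \<sigma> y powr l = ndv b \<sigma> y powr (1 - l)"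
    using pb by (simp add: powr_diff)
  finally show ?thesis .
qed

lemma renyi_div_proj:
  fixes a b :: "real^'m::finite" and K :: "(real^'m) set"
  assumes \<sigma>: "\<sigma> > 0" and K: "convex K" "closed K" "K \<noteq> {}" and l: "l > 1"
  defines "T \<equiv> closest_point K"
  defines "P' \<equiv> distr (gauss_measure a \<sigma>) borel T" and "Q' \<equiv> distr (gauss_measure b \<sigma>) borel T"
  shows "renyi_div l P' Q' \<le> ereal (l * (norm (a - b))^2 / (2 * \<sigma>^2))"
proof -
  have Tm[measurable]: "T \<in> borel_measurable borel" using cp_meas[OF K] by (simp add: T_def)
  interpret Qg: prob_space "gauss_measure b \<sigma>" by (rule prob_gauss[OF \<sigma>])
  interpret Pg: prob_space "gauss_measure a \<sigma>" by (rule prob_gauss[OF \<sigma>])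
  have TmQ[measurable]: "T \<in> measurable (gauss_measure b \<sigma>) borel"
    using Tm by (simp add: measurable_def)
  have TmP[measurable]: "T \<in> measurable (gauss_measure a \<sigma>) borel"
    using Tm by (simp add: measurable_def)
  interpret Q': prob_space Q' unfolding Q'_def by (rule Qg.prob_space_distr) (rule TmQ)
  interpret P': prob_space P' unfolding P'_def by (rule Pg.prob_space_distr) (rule TmP)
  have setsP[simp]: "sets P' = sets borel" and setsQ[simp]: "sets Q' = sets borel"
    by (simp_all add: P'_def Q'_def)
  have spP[simp]: "space P' = UNIV" and spQ[simp]: "space Q' = UNIV"
    by (simp_all add: P'_def Q'_def)
  have mQ: "h \<in> borel_measurable Q'" if "h \<in> borel_measurable borel" for h :: "real^'m \<Rightarrow> ennreal"
    using that measurable_cong_sets[OF setsQ refl] by blast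
  have ac: "absolutely_continuous Q' P'"
    unfolding absolutely_continuous_def Q'_def P'_def
    using null_sets_distr_iff[OF TmQ] null_sets_distr_iff[OF TmP] null_gauss[OF \<sigma>, of a] null_gauss[OF \<sigma>, of b]
    by auto
  define g where "g = RN_deriv Q' P'"
  have gmQ: "g \<in> borel_measurable Q'" unfolding g_def by (rule borel_measurable_RN_deriv)
  then have gm[measurable]: "g \<in> borel_measurable borel" by (simp add: measurable_def)
  have dens: "density Q' g = P'" unfolding g_def by (rule Q'.density_RN_deriv[OF ac]) simp
  have fin: "AE x in Q'. g x \<noteq> \<infinity>" unfolding g_def
    by (rule Q'.RN_deriv_finite[OF _ ac]) (auto intro: P'.sigma_finite_measure)
  define G where "G x = enn2real (g x)" for x
  have Gm[measurable]: "G \<in> borel_measurable borel" unfolding G_def by measurable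
  have Gnn: "G x \<ge> 0" for x by (simp add: G_def)
  have gG: "AE x in Q'. g x = ennreal (G x)" using fin by eventually_elim (simp add: G_def ennreal_enn2real_if)
  define E where "E = (\<integral>\<^sup>+ x. ennreal ((enn2real (RN_deriv Q' P' x)) powr (l - 1)) \<partial>P')"
  have "E = (\<integral>\<^sup>+ x. ennreal (G x powr (l - 1)) \<partial>P')"
    by (simp add: E_def G_def g_def)
  also have "\<dots> = (\<integral>\<^sup>+ x. g x * ennreal (G x powr (l - 1)) \<partial>Q')"
    by (subst dens[symmetric], rule nn_integral_density[OF gmQ mQ]) measurable
  also have "\<dots> = (\<integral>\<^sup>+ x. ennreal (G x powr l) \<partial>Q')"
  proof (rule nn_integral_cong_AE)
    show "AE x in Q'. g x * ennreal (G x powr (l - 1)) = ennreal (G x powr l)"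
      using gG
    proof eventually_elim
      case (elim x)
      have "G x * G x powr (l - 1) = G x powr l"
        using Gnn[of x] powr_add[of "G x" 1 "l - 1"] by (cases "G x = 0") auto
      then show ?case using elim Gnn[of x] by (simp add: ennreal_mult[symmetric])
    qed
  qed
  also have "\<dots> = (\<integral>\<^sup>+ y. ennreal (G (T y) powr l) \<partial>gauss_measure b \<sigma>)"
    unfolding Q'_def by (subst nn_integral_distr) auto
  finally have E1: "E = (\<integral>\<^sup>+ y. ennreal (G (T y) powr l) \<partial>gauss_measure b \<sigma>)" .
  define f where "f y = ndv a \<sigma> y / ndv b \<sigma> y" for y
  have fm[measurable]: "f \<in> borel_measurable borel" unfolding f_def by measurable
  have fnn: "f y \<ge> 0" for y unfolding f_def using ndv_pos[OF \<sigma>, of a y] ndv_pos[OF \<sigma>, of b y] by simp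
  have key: "(\<integral>\<^sup>+y. h (T y) * ennreal (f y) \<partial>gauss_measure b \<sigma>) = (\<integral>\<^sup>+y. h (T y) * ennreal (G (T y)) \<partial>gauss_measure b \<sigma>)"
    if hm[measurable]: "h \<in> borel_measurable borel" for h :: "real^'m \<Rightarrow> ennreal"
  proof -
    have "(\<integral>\<^sup>+y. h (T y) * ennreal (f y) \<partial>gauss_measure b \<sigma>) = (\<integral>\<^sup>+y. ennreal (ndv b \<sigma> y) * (h (T y) * ennreal (f y)) \<partial>lborel)"
      by (rule nn_int_gauss) measurable
    also have "\<dots> = (\<integral>\<^sup>+y. ennreal (ndv a \<sigma> y) * h (T y) \<partial>lborel)"
    proof (rule nn_integral_cong)
      fix y
      have "ndv b \<sigma> y * f y = ndv a \<sigma> y" unfolding f_def using ndv_pos[OF \<sigma>, of b y] by simp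
      then have "ennreal (ndv b \<sigma> y) * ennreal (f y) = ennreal (ndv a \<sigma> y)"
        using fnn[of y] ndv_pos[OF \<sigma>, of b y] by (simp add: ennreal_mult[symmetric])
      then show "ennreal (ndv b \<sigma> y) * (h (T y) * ennreal (f y)) = ennreal (ndv a \<sigma> y) * h (T y)"
        by (metis mult.assoc mult.commute)
    qed
    also have "\<dots> = (\<integral>\<^sup>+y. h (T y) \<partial>gauss_measure a \<sigma>)"
      by (rule nn_int_gauss[symmetric]) measurable
    also have "\<dots> = (\<integral>\<^sup>+z. h z \<partial>P')"
      unfolding P'_def by (subst nn_integral_distr) auto
    also have "\<dots> = (\<integral>\<^sup>+z. g z * h z \<partial>Q')"
      by (subst dens[symmetric], rule nn_integral_density[OF gmQ mQ]) (rule hm)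
    also have "\<dots> = (\<integral>\<^sup>+z. h z * ennreal (G z) \<partial>Q')"
      by (rule nn_integral_cong_AE) (use gG in \<open>auto simp: mult.commute\<close>)
    also have "\<dots> = (\<integral>\<^sup>+y. h (T y) * ennreal (G (T y)) \<partial>gauss_measure b \<sigma>)"
      unfolding Q'_def by (subst nn_integral_distr) auto
    finally show ?thesis .
  qed
  have "E \<le> (\<integral>\<^sup>+ y. ennreal (f y powr l) \<partial>gauss_measure b \<sigma>)"
    unfolding E1
    by (rule dpi[OF Qg.prob_space_axioms l _ TmQ _ fnn Gnn key]) auto
  also have "\<dots> = (\<integral>\<^sup>+ y. ennreal (ndv a \<sigma> y powr l * ndv b \<sigma> y powr (1 - l)) \<partial>lborel)"
  proof -
    have "(\<integral>\<^sup>+ y. ennreal (f y powr l) \<partial>gauss_measure b \<sigma>) = (\<integral>\<^sup>+y. ennreal (ndv b \<sigma> y) * ennreal (f y powr l) \<partial>lborel)"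
      by (rule nn_int_gauss) measurable
    also have "\<dots> = (\<integral>\<^sup>+ y. ennreal (ndv a \<sigma> y powr l * ndv b \<sigma> y powr (1 - l)) \<partial>lborel)"
      using ndv_pos[OF \<sigma>, of b]
      by (intro nn_integral_cong) (simp add: ennreal_mult[symmetric] less_imp_le ndv_ratio_powr[OF \<sigma>] f_def)
    finally show ?thesis .
  qed
  also have "\<dots> = ennreal (exp (l * (l - 1) * (norm (a - b))^2 / (2 * \<sigma>^2)))"
    by (rule ndv_renyi[OF \<sigma>])
  finally have Ele: "E \<le> ennreal (exp (l * (l - 1) * (norm (a - b))^2 / (2 * \<sigma>^2)))" .
  then have Eninf: "E \<noteq> \<infinity>" by (auto simp: top_unique)
  have lnE: "ln (enn2real E) \<le> l * (l - 1) * (norm (a - b))^2 / (2 * \<sigma>^2)"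
  proof (cases "enn2real E > 0")
    case True
    have "enn2real E \<le> exp (l * (l - 1) * (norm (a - b))^2 / (2 * \<sigma>^2))"
      using Ele by (simp add: enn2real_leI)
    then have "ln (enn2real E) \<le> ln (exp (l * (l - 1) * (norm (a - b))^2 / (2 * \<sigma>^2)))"
      using True by (subst ln_le_cancel_iff) auto
    then show ?thesis by simp
  next
    case False
    then have "enn2real E = 0" using enn2real_nonneg[of E] by linarith
    then show ?thesis using l by simp
  qed
  have "renyi_div l P' Q' = ereal (ln (enn2real E) / (l - 1))"
    unfolding renyi_div_def E_def[symmetric] using ac Eninf by (simp add: Let_def)
  also have "\<dots> \<le> ereal (l * (norm (a - b))^2 / (2 * \<sigma>^2))"
  proof -
    have "ln (enn2real E) / (l - 1) \<le> (l * (l - 1) * (norm (a - b))^2 / (2 * \<sigma>^2)) / (l - 1)"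
      using lnE l by (intro divide_right_mono) auto
    also have "\<dots> = l * (norm (a - b))^2 / (2 * \<sigma>^2)" using l by (simp add: divide_simps)
    finally show ?thesis by simp
  qed
  finally show ?thesis .
qed

lemma renyi_star_proj:
  fixes a b :: "real^'m::finite" and K :: "(real^'m) set"
  assumes \<sigma>: "\<sigma> > 0" and K: "convex K" "closed K" "K \<noteq> {}"
  shows "renyi_star (distr (gauss_measure a \<sigma>) borel (closest_point K)) (distr (gauss_measure b \<sigma>) borel (closest_point K))
     \<le> ereal ((norm (a - b))^2 / (2 * \<sigma>^2))"
  unfolding renyi_star_def
proof (rule SUP_least)
  fix l :: real assume "l \<in> {1<..}"
  then have l: "l > 1" by simp
  obtain r where r: "renyi_div l (distr (gauss_measure a \<sigma>) borel (closest_point K)) (distr (gauss_measure b \<sigma>) borel (closest_point K)) = r"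
    by blast
  have "r \<le> ereal (l * (norm (a - b))^2 / (2 * \<sigma>^2))"
    using renyi_div_proj[OF \<sigma> K l, of a b] r by simp
  then show "renyi_div l (distr (gauss_measure a \<sigma>) borel (closest_point K)) (distr (gauss_measure b \<sigma>) borel (closest_point K)) / ereal l
     \<le> ereal ((norm (a - b))^2 / (2 * \<sigma>^2))"
    unfolding r using l
    by (cases r) (auto simp: field_simps)
qed



lemma nn_int_proj:
  fixes mu :: "real^'m::finite" and K :: "(real^'m) set" and F :: "real^'m \<Rightarrow> ennreal"
  assumes K: "convex K" "closed K" "K \<noteq> {}" and [measurable]: "F \<in> borel_measurable borel"
  shows "(\<integral>\<^sup>+y. F y \<partial>distr (gauss_measure mu \<sigma>) borel (closest_point K)) = (\<integral>\<^sup>+y. F (closest_point K y) \<partial>gauss_measure mu \<sigma>)"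
proof -
  have [measurable]: "closest_point K \<in> borel_measurable borel" by (rule cp_meas[OF K])
  have [measurable]: "closest_point K \<in> measurable (gauss_measure mu \<sigma>) borel"
    using cp_meas[OF K] by (simp add: measurable_def)
  show ?thesis by (subst nn_integral_distr) auto
qed

lemma acc1:
  fixes mu :: "real^'m::finite" and K :: "(real^'m) set"
  assumes \<sigma>: "\<sigma> > 0" and K: "convex K" "closed K" and muK: "mu \<in> K"
  shows "(\<integral>\<^sup>+y. ennreal (norm (y - mu) ^ 2 / real CARD('m)) \<partial>distr (gauss_measure mu \<sigma>) borel (closest_point K)) \<le> ennreal (\<sigma>^2)"
proof -
  have Kne: "K \<noteq> {}" using muK by auto
  have "(\<integral>\<^sup>+y. ennreal (norm (y - mu) ^ 2 / real CARD('m)) \<partial>distr (gauss_measure mu \<sigma>) borel (closest_point K))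
      = (\<integral>\<^sup>+y. ennreal (norm (closest_point K y - mu) ^ 2 / real CARD('m)) \<partial>gauss_measure mu \<sigma>)"
    by (rule nn_int_proj[OF K Kne]) measurable
  also have "\<dots> \<le> (\<integral>\<^sup>+y. ennreal (norm (y - mu) ^ 2) * ennreal (1 / real CARD('m)) \<partial>gauss_measure mu \<sigma>)"
  proof (rule nn_integral_mono)
    fix y
    have "dist (closest_point K y) (closest_point K mu) \<le> dist y mu"
      by (rule closest_point_lipschitz[OF K Kne])
    then have "norm (closest_point K y - mu) \<le> norm (y - mu)"
      using closest_point_self[OF muK] by (simp add: dist_norm)
    then have "norm (closest_point K y - mu) ^ 2 / real CARD('m) \<le> norm (y - mu) ^ 2 * (1 / real CARD('m))"
      by (simp add: divide_right_mono power_mono)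
    then show "ennreal (norm (closest_point K y - mu) ^ 2 / real CARD('m)) \<le> ennreal (norm (y - mu) ^ 2) * ennreal (1 / real CARD('m))"
      by (simp add: ennreal_mult[symmetric] ennreal_leI)
  qed
  also have "\<dots> = (\<integral>\<^sup>+y. ennreal (norm (y - mu) ^ 2) \<partial>gauss_measure mu \<sigma>) * ennreal (1 / real CARD('m))"
    by (rule nn_integral_multc) measurable
  also have "\<dots> = ennreal (real CARD('m) * \<sigma>^2) * ennreal (1 / real CARD('m))"
    by (simp add: gauss_var[OF \<sigma>])
  also have "\<dots> = ennreal (\<sigma>^2)"
    by (simp add: ennreal_mult[symmetric])
  finally show ?thesis .
qed

lemma pw_bound:
  fixes mu y :: "real^'m::finite" and A :: "(real^'m) set"
  assumes A: "finite A" "A \<noteq> {}" and t: "t > 0" and muK: "mu \<in> closure (convex hull A)"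
  shows "t * norm (closest_point (closure (convex hull A)) y - mu) ^ 2 + 1
     \<le> (\<Sum>a\<in>A. exp (t * inner (a - mu) (y - mu))) * exp (- c) + c"
proof -
  define K where "K = closure (convex hull A)"
  have K: "convex K" "closed K" "K \<noteq> {}" using muK by (auto simp: K_def convex_closure)
  define p where "p = closest_point K y"
  have pK: "p \<in> K" unfolding p_def by (rule closest_point_in_set) (use K in auto)
  define W where "W = Max ((\<lambda>a. inner (a - mu) (y - mu)) ` A)"
  have "inner (y - p) (mu - p) \<le> 0"
    unfolding p_def by (rule closest_point_dot[OF K(1,2)]) (use muK in \<open>simp add: K_def\<close>)
  then have n1: "norm (p - mu) ^ 2 \<le> inner (p - mu) (y - mu)"
    by (simp add: power2_norm_eq_inner algebra_simps inner_commute)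
  have "K \<subseteq> {v. inner (y - mu) v \<le> W + inner (y - mu) mu}"
    unfolding K_def
  proof (intro closure_minimal hull_minimal)
    show "A \<subseteq> {v. inner (y - mu) v \<le> W + inner (y - mu) mu}"
    proof
      fix a assume "a \<in> A"
      then have "inner (a - mu) (y - mu) \<le> W" unfolding W_def using A by (intro Max_ge) auto
      then show "a \<in> {v. inner (y - mu) v \<le> W + inner (y - mu) mu}"
        by (simp add: inner_diff_left inner_commute)
    qed
  qed (auto intro: convex_halfspace_le closed_halfspace_le)
  then have "inner (p - mu) (y - mu) \<le> W" using pK by (auto simp: inner_diff_left inner_commute)
  with n1 have nW: "norm (p - mu) ^ 2 \<le> W" by linarith
  have "W \<in> (\<lambda>a. inner (a - mu) (y - mu)) ` A"
    unfolding W_def using A by (intro Max_in) auto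
  then obtain a0 where a0: "a0 \<in> A" "W = inner (a0 - mu) (y - mu)" by auto
  have "exp (t * W) \<le> (\<Sum>a\<in>A. exp (t * inner (a - mu) (y - mu)))"
    using a0 A by (auto intro!: member_le_sum)
  moreover have "t * W + 1 \<le> exp (t * W) * exp (- c) + c"
    using exp_ge_add_one_self[of "t * W - c"] by (simp add: exp_diff exp_minus field_simps)
  ultimately have "t * W + 1 \<le> (\<Sum>a\<in>A. exp (t * inner (a - mu) (y - mu))) * exp (- c) + c"
    by (smt (verit) exp_gt_zero mult_right_mono)
  moreover have "t * norm (p - mu) ^ 2 \<le> t * W" using nW t by simp
  ultimately show ?thesis unfolding p_def K_def by linarith
qed

lemma acc2:
  fixes mu :: "real^'m::finite" and A :: "(real^'m) set"
  assumes \<sigma>: "\<sigma> > 0" and A: "finite A" "A \<noteq> {}" and t: "t > 0"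
    and muK: "mu \<in> closure (convex hull A)" and D: "\<And>a. a \<in> A \<Longrightarrow> norm (a - mu) \<le> D"
  shows "ennreal t * (\<integral>\<^sup>+y. ennreal (norm (closest_point (closure (convex hull A)) y - mu) ^ 2) \<partial>gauss_measure mu \<sigma>)
     \<le> ennreal (ln (real (card A)) + t^2 * \<sigma>^2 * D^2 / 2)"
proof -
  define K where "K = closure (convex hull A)"
  have K: "convex K" "closed K" "K \<noteq> {}" using muK by (auto simp: K_def convex_closure)
  have [measurable]: "closest_point K \<in> borel_measurable borel" by (rule cp_meas[OF K])
  interpret G: prob_space "gauss_measure mu \<sigma>" by (rule prob_gauss[OF \<sigma>])
  have e1: "emeasure (gauss_measure mu \<sigma>) UNIV = 1" using G.emeasure_space_1 by simp
  define c where "c = ln (real (card A)) + t^2 * \<sigma>^2 * D^2 / 2"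
  have cA: "card A \<ge> 1" using A by (simp add: Suc_le_eq card_gt_0_iff)
  have c0: "c \<ge> 0" unfolding c_def using cA by simp
  define I where "I = (\<integral>\<^sup>+y. ennreal (norm (closest_point K y - mu) ^ 2) \<partial>gauss_measure mu \<sigma>)"
  have "ennreal t * I + 1 = (\<integral>\<^sup>+y. ennreal t * ennreal (norm (closest_point K y - mu) ^ 2) + 1 \<partial>gauss_measure mu \<sigma>)"
    unfolding I_def
    by (subst nn_integral_add) (auto simp: nn_integral_cmult e1)
  also have "\<dots> \<le> (\<integral>\<^sup>+y. (\<Sum>a\<in>A. ennreal (exp (t * inner (a - mu) (y - mu)))) * ennreal (exp (- c)) + ennreal c \<partial>gauss_measure mu \<sigma>)"
  proof (rule nn_integral_mono)
    fix y
    have "t * norm (closest_point K y - mu) ^ 2 + 1 \<le> (\<Sum>a\<in>A. exp (t * inner (a - mu) (y - mu))) * exp (- c) + c"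
      unfolding K_def by (rule pw_bound[OF A t muK])
    then have "ennreal (t * norm (closest_point K y - mu) ^ 2 + 1) \<le> ennreal ((\<Sum>a\<in>A. exp (t * inner (a - mu) (y - mu))) * exp (- c) + c)"
      by (rule ennreal_leI)
    show "ennreal t * ennreal (norm (closest_point K y - mu) ^ 2) + 1 \<le> (\<Sum>a\<in>A. ennreal (exp (t * inner (a - mu) (y - mu)))) * ennreal (exp (- c)) + ennreal c"
    proof -
      have e1': "ennreal t * ennreal (norm (closest_point K y - mu) ^ 2) + 1 = ennreal (t * norm (closest_point K y - mu) ^ 2 + 1)"
        using t by (simp add: ennreal_mult)
      have e2': "(\<Sum>a\<in>A. ennreal (exp (t * inner (a - mu) (y - mu)))) * ennreal (exp (- c)) + ennreal c
          = ennreal ((\<Sum>a\<in>A. exp (t * inner (a - mu) (y - mu))) * exp (- c) + c)"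
        using c0 by (simp add: ennreal_mult sum_nonneg sum_ennreal)
      show ?thesis unfolding e1' e2' by fact
    qed
  qed
  also have "\<dots> = (\<Sum>a\<in>A. (\<integral>\<^sup>+y. ennreal (exp (t * inner (a - mu) (y - mu))) \<partial>gauss_measure mu \<sigma>)) * ennreal (exp (- c)) + ennreal c"
    by (subst nn_integral_add) (auto simp: nn_integral_multc nn_integral_sum e1 simp del: sum_ennreal)
  also have "\<dots> \<le> (\<Sum>a\<in>A. ennreal (exp (t^2 * \<sigma>^2 * D^2 / 2))) * ennreal (exp (- c)) + ennreal c"
  proof (intro add_mono mult_right_mono sum_mono order_refl)
    fix a assume "a \<in> A"
    then have "norm (a - mu) ^ 2 \<le> D ^ 2" using D[of a] by (intro power_mono) auto
    then have "exp (t^2 * \<sigma>^2 * (norm (a - mu))^2 / 2) \<le> exp (t^2 * \<sigma>^2 * D^2 / 2)"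
      by (simp add: mult_left_mono divide_right_mono)
    then show "(\<integral>\<^sup>+y. ennreal (exp (t * inner (a - mu) (y - mu))) \<partial>gauss_measure mu \<sigma>) \<le> ennreal (exp (t^2 * \<sigma>^2 * D^2 / 2))"
      by (simp add: gauss_mgf[OF \<sigma>] ennreal_leI)
  qed simp
  also have "\<dots> = 1 + ennreal c"
  proof -
    have "real (card A) * exp (t^2 * \<sigma>^2 * D^2 / 2) * exp (- c) = 1"
    proof -
      have "exp c = real (card A) * exp (t^2 * \<sigma>^2 * D^2 / 2)"
        unfolding c_def using cA by (simp add: exp_add)
      then show ?thesis using cA by (simp add: exp_minus field_simps)
    qed
    then show ?thesis
      by (simp add: ennreal_mult[symmetric] ennreal_of_nat_eq_real_of_nat mult.commute)
  qed
  finally have "ennreal t * I + 1 \<le> 1 + ennreal c" .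
  then have "ennreal t * I \<le> ennreal c"
    by (simp add: add.commute ennreal_add_left_cancel_le)
  then show ?thesis unfolding I_def K_def c_def .
qed



lemma ereal_bound:
  fixes s :: ereal and z k h :: real
  assumes z: "0 \<le> z" and k: "k > 0" and h: "0 \<le> h" and s0: "0 \<le> s"
    and fin: "\<And>r. s = ereal r \<Longrightarrow> z \<le> r * h" and h0: "h = 0 \<Longrightarrow> z = 0"
  shows "ereal (z^2 / (2 * k^2)) \<le> ereal (1/2) * (s / ereal k)^2 * ereal (h^2)"
proof (cases s)
  case (real r)
  have r0: "r \<ge> 0" using s0 real by simp
  have "z^2 \<le> (r * h)^2" using fin[OF real] z by (intro power_mono) auto
  then have "z^2 / (2 * k^2) \<le> 1/2 * (r / k)^2 * h^2"
    using k by (simp add: field_simps power_mult_distrib)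
  then show ?thesis using real k by (simp add: power2_eq_square)
next
  case PInf
  show ?thesis
  proof (cases "h = 0")
    case True then show ?thesis using h0 PInf k by (simp add: power2_eq_square)
  next
    case False
    then have "h^2 > 0" using h by simp
    then have "ereal (h^2) > 0" by simp
    then have "(\<infinity>::ereal) * ereal (h^2) = \<infinity>" by simp
    moreover have "(s / ereal k)^2 = \<infinity>" using PInf k by (simp add: power2_eq_square)
    ultimately show ?thesis by simp
  qed
next
  case MInf then show ?thesis using s0 by simp
qed

lemma hamming_path:
  fixes Q :: "(nat \<Rightarrow> 'a) \<Rightarrow> real^'m::finite"
  assumes step: "\<And>u v. u \<in> PiE {..<d} Xs \<Longrightarrow> v \<in> PiE {..<d} Xs \<Longrightarrow> hamming d u v \<le> 1 \<Longrightarrow> norm (Q u - Q v) \<le> r"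
  shows "u \<in> PiE {..<d} Xs \<Longrightarrow> v \<in> PiE {..<d} Xs \<Longrightarrow> norm (Q u - Q v) \<le> r * hamming d u v"
proof (induction "hamming d u v" arbitrary: u)
  case 0
  have "finite {j \<in> {..<d}. u j \<noteq> v j}" by simp
  then have "{j \<in> {..<d}. u j \<noteq> v j} = {}" using 0 by (simp add: hamming_def)
  have "u = v"
  proof (rule ext)
    fix x show "u x = v x"
      using 0 \<open>{j \<in> {..<d}. u j \<noteq> v j} = {}\<close> by (cases "x < d") (auto simp: PiE_def extensional_def)
  qed
  have h0: "hamming d u v = 0" using 0 by simp
  show ?case unfolding h0 using \<open>u = v\<close> by simp
next
  case (Suc k u)
  then have "hamming d u v \<noteq> 0" by simp
  then have "{j \<in> {..<d}. u j \<noteq> v j} \<noteq> {}" unfolding hamming_def by (metis card.empty)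
  then obtain j where j: "j < d" "u j \<noteq> v j" by auto
  define w where "w = u(j := v j)"
  have w: "w \<in> PiE {..<d} Xs" using Suc.prems j by (auto simp: w_def PiE_def extensional_def)
  have "{i \<in> {..<d}. w i \<noteq> v i} = {i \<in> {..<d}. u i \<noteq> v i} - {j}" by (auto simp: w_def)
  then have hw: "hamming d w v = k" using Suc.hyps(2) j by (simp add: hamming_def)
  have "{i \<in> {..<d}. u i \<noteq> w i} = {j}" using j by (auto simp: w_def)
  then have huw: "hamming d u w = 1" by (simp add: hamming_def)
  have "norm (Q u - Q v) \<le> norm (Q u - Q w) + norm (Q w - Q v)" by (rule norm_diff_triangle_le[of _ "Q w"]) simp_all
  also have "norm (Q u - Q w) \<le> r" using step[OF Suc.prems(1) w] huw by simp
  also have "norm (Q w - Q v) \<le> r * k" using Suc.hyps(1)[OF hw[symmetric] w Suc.prems(2)] hw by simp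
  finally show ?case unfolding Suc.hyps(2)[symmetric] by (simp add: algebra_simps)
qed

lemma sens_fin:
  fixes Q :: "'b \<Rightarrow> real^'m::finite"
  assumes "finite X" "X \<noteq> {}"
  shows "\<exists>D\<ge>0. sens X Q = ereal D \<and> (\<forall>u\<in>X. \<forall>v\<in>X. norm (Q u - Q v) \<le> D) \<and> (D > 0 \<longrightarrow> (\<exists>u\<in>X. \<exists>v\<in>X. Q u \<noteq> Q v))"
proof -
  define S where "S = {ereal (norm (Q u - Q v)) | u v. u \<in> X \<and> v \<in> X}"
  have S: "S = (\<lambda>(u, v). ereal (norm (Q u - Q v))) ` (X \<times> X)" by (auto simp: S_def)
  have "Sup S \<in> S"
    by (rule finite_Sup_in) (use assms in \<open>auto simp: S sup_max max_def\<close>)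
  then obtain u0 v0 where uv: "u0 \<in> X" "v0 \<in> X" "Sup S = ereal (norm (Q u0 - Q v0))" by (auto simp: S_def)
  show ?thesis
  proof (intro exI conjI ballI impI)
    show "sens X Q = ereal (norm (Q u0 - Q v0))" using uv by (simp add: sens_def S_def)
    fix u v assume "u \<in> X" "v \<in> X"
    then have "ereal (norm (Q u - Q v)) \<le> Sup S" by (intro Sup_upper) (auto simp: S_def)
    then show "norm (Q u - Q v) \<le> norm (Q u0 - Q v0)" using uv by simp
  next
    assume "norm (Q u0 - Q v0) > 0"
    then show "\<exists>u\<in>X. \<exists>v\<in>X. Q u \<noteq> Q v" using uv by auto
  qed simp
qed



lemma hamming0:
  assumes "u \<in> PiE {..<d} Xs" "v \<in> PiE {..<d} Xs" "hamming d u v = 0"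
  shows "u = v"
proof (rule ext)
  have "finite {j \<in> {..<d}. u j \<noteq> v j}" by simp
  then have e: "{j \<in> {..<d}. u j \<noteq> v j} = {}" using assms(3) by (simp add: hamming_def)
  fix x show "u x = v x"
    using assms(1,2) e by (cases "x < d") (auto simp: PiE_def extensional_def)
qed

lemma avg_diff:
  fixes Q :: "'b \<Rightarrow> real^'m::finite"
  assumes "neighbours n i x x'"
  shows "avgQ Q n x - avgQ Q n x' = (1 / real n) *\<^sub>R (Q (x i) - Q (x' i))"
proof -
  have i: "i < n" and eq: "\<And>j. j < n \<Longrightarrow> j \<noteq> i \<Longrightarrow> x j = x' j" using assms by (auto simp: neighbours_def)
  have "(\<Sum>j<n. Q (x j)) - (\<Sum>j<n. Q (x' j)) = (\<Sum>j<n. Q (x j) - Q (x' j))"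
    by (simp add: sum_subtractf)
  also have "\<dots> = (\<Sum>j<n. if j = i then Q (x i) - Q (x' i) else 0)"
    by (rule sum.cong) (auto simp: eq)
  also have "\<dots> = Q (x i) - Q (x' i)" using i by simp
  finally show ?thesis unfolding avgQ_def by (simp add: scaleR_diff_right[symmetric])
qed

theorem theorem4p1:
  fixes d n :: nat and Xs :: "nat \<Rightarrow> 'a set" and \<sigma> :: real
    and Q :: "(nat \<Rightarrow> 'a) \<Rightarrow> real^'m"
  assumes "\<sigma> > 0" and "n \<ge> 1" and "\<And>j. j < d \<Longrightarrow> Xs j \<noteq> {}"
  defines "X \<equiv> PiE {..<d} Xs"
  defines "M \<equiv> proj_gauss_mech X Q \<sigma> n"
  shows "zCDP X n M (sens X Q / ereal (\<sigma> * real n))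
       \<and> nabla0CDP d X n M (sens0 d X Q / ereal (\<sigma> * real n))
       \<and> (\<forall>x \<in> PiE {..<n} (\<lambda>_. X).
            (\<integral>\<^sup>+ y. ennreal (norm (y - avgQ Q n x) ^ 2 / real CARD('m)) \<partial>(M x)) \<le> ennreal (\<sigma>^2)
          \<and> (finite X \<longrightarrow>
            (\<integral>\<^sup>+ y. ennreal (norm (y - avgQ Q n x) ^ 2 / real CARD('m)) \<partial>(M x))
              \<le> ennreal (\<sigma> * real_of_ereal (sens X Q) * sqrt (2 * ln (real (card X))) / real CARD('m))))"
proof -
  have \<sigma>: "\<sigma> > 0" by fact
  have n: "real n > 0" using assms(2) by simp
  have kpos: "\<sigma> * real n > 0" using \<sigma> n by simp
  have Xne: "X \<noteq> {}" unfolding X_def using assms(3) by (simp add: PiE_eq_empty_iff)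
  define K where "K = closure (convex hull (Q ` X))"
  have K: "convex K" "closed K" "K \<noteq> {}" using Xne by (auto simp: K_def convex_closure)
  have M_eq: "M x = distr (gauss_measure (avgQ Q n x) \<sigma>) borel (closest_point K)" for x
    by (simp add: M_def proj_gauss_mech_def K_def)
  have avgK: "avgQ Q n x \<in> K" if x: "x \<in> PiE {..<n} (\<lambda>_. X)" for x
  proof -
    have "avgQ Q n x = (\<Sum>i<n. (1 / real n) *\<^sub>R Q (x i))" by (simp add: avgQ_def scaleR_sum_right)
    also have "\<dots> \<in> convex hull (Q ` X)"
      by (rule convex_sum) (use x n in \<open>auto intro: hull_inc\<close>)
    finally show ?thesis unfolding K_def using closure_subset by blast
  qed
  have renyi: "renyi_star (M x) (M x') \<le> ereal ((norm (Q (x i) - Q (x' i)))^2 / (2 * (\<sigma> * real n)^2))"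
    if nb: "neighbours n i x x'" for x x' i
  proof -
    have "renyi_star (M x) (M x') \<le> ereal ((norm (avgQ Q n x - avgQ Q n x'))^2 / (2 * \<sigma>^2))"
      unfolding M_eq by (rule renyi_star_proj[OF \<sigma> K])
    also have "(norm (avgQ Q n x - avgQ Q n x'))^2 / (2 * \<sigma>^2) = (norm (Q (x i) - Q (x' i)))^2 / (2 * (\<sigma> * real n)^2)"
      unfolding avg_diff[OF nb] using n by (simp add: power_divide power_mult_distrib)
    finally show ?thesis .
  qed
  have part1: "zCDP X n M (sens X Q / ereal (\<sigma> * real n))"
    unfolding zCDP_def
  proof (intro ballI allI impI)
    fix x x' i assume x: "x \<in> PiE {..<n} (\<lambda>_. X)" and x': "x' \<in> PiE {..<n} (\<lambda>_. X)" and nb: "neighbours n i x x'"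
    have i: "i < n" using nb by (simp add: neighbours_def)
    have xi: "x i \<in> X" "x' i \<in> X" using x x' i by auto
    have up: "ereal (norm (Q u - Q v)) \<le> sens X Q" if "u \<in> X" "v \<in> X" for u v
      unfolding sens_def by (rule Sup_upper) (use that in auto)
    have s0: "0 \<le> sens X Q" using up[OF xi(1) xi(1)] by (simp add: zero_ereal_def)
    have "ereal ((norm (Q (x i) - Q (x' i)))^2 / (2 * (\<sigma> * real n)^2)) \<le> ereal (1/2) * (sens X Q / ereal (\<sigma> * real n))^2 * ereal (1^2)"
      by (rule ereal_bound[OF _ kpos _ s0]) (use up[OF xi] in auto)
    then show "renyi_star (M x) (M x') \<le> ereal (1/2) * (sens X Q / ereal (\<sigma> * real n))^2"
      using renyi[OF nb] by (simp add: one_ereal_def[symmetric])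
  qed
  have part2: "nabla0CDP d X n M (sens0 d X Q / ereal (\<sigma> * real n))"
    unfolding nabla0CDP_def
  proof (intro ballI allI impI)
    fix x x' i assume x: "x \<in> PiE {..<n} (\<lambda>_. X)" and x': "x' \<in> PiE {..<n} (\<lambda>_. X)" and nb: "neighbours n i x x'"
    have i: "i < n" using nb by (simp add: neighbours_def)
    have xi: "x i \<in> X" "x' i \<in> X" using x x' i by auto
    have up: "ereal (norm (Q u - Q v)) \<le> sens0 d X Q" if "u \<in> X" "v \<in> X" "hamming d u v \<le> 1" for u v
      unfolding sens0_def by (rule Sup_upper) (use that in auto)
    have h00: "hamming d (x i) (x i) = 0" by (simp add: hamming_def)
    have s0: "0 \<le> sens0 d X Q" using up[OF xi(1) xi(1)] h00 by (simp add: zero_ereal_def)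
    have fin: "norm (Q (x i) - Q (x' i)) \<le> r * real (hamming d (x i) (x' i))" if r: "sens0 d X Q = ereal r" for r
    proof (rule hamming_path[of d Xs Q r])
      fix u v assume "u \<in> PiE {..<d} Xs" "v \<in> PiE {..<d} Xs" "hamming d u v \<le> 1"
      then show "norm (Q u - Q v) \<le> r" using up[of u v] r by (simp add: X_def)
    qed (use xi in \<open>auto simp: X_def\<close>)
    have h0: "norm (Q (x i) - Q (x' i)) = 0" if "real (hamming d (x i) (x' i)) = 0"
      using hamming0[of "x i" d Xs "x' i"] xi that by (simp add: X_def)
    have "ereal ((norm (Q (x i) - Q (x' i)))^2 / (2 * (\<sigma> * real n)^2))
        \<le> ereal (1/2) * (sens0 d X Q / ereal (\<sigma> * real n))^2 * ereal ((real (hamming d (x i) (x' i)))^2)"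
      by (rule ereal_bound[OF _ kpos _ s0 fin h0]) auto
    then show "renyi_star (M x) (M x') \<le> ereal (1/2) * (sens0 d X Q / ereal (\<sigma> * real n))^2 * ereal ((real (hamming d (x i) (x' i)))^2)"
      using renyi[OF nb] by simp
  qed
  have part3: "(\<integral>\<^sup>+ y. ennreal (norm (y - avgQ Q n x) ^ 2 / real CARD('m)) \<partial>(M x)) \<le> ennreal (\<sigma>^2)
          \<and> (finite X \<longrightarrow>
            (\<integral>\<^sup>+ y. ennreal (norm (y - avgQ Q n x) ^ 2 / real CARD('m)) \<partial>(M x))
              \<le> ennreal (\<sigma> * real_of_ereal (sens X Q) * sqrt (2 * ln (real (card X))) / real CARD('m)))"
    if x: "x \<in> PiE {..<n} (\<lambda>_. X)" for x
  proof (intro conjI impI)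
    show "(\<integral>\<^sup>+ y. ennreal (norm (y - avgQ Q n x) ^ 2 / real CARD('m)) \<partial>(M x)) \<le> ennreal (\<sigma>^2)"
      unfolding M_eq by (rule acc1[OF \<sigma> K(1,2) avgK[OF x]])
    assume fX: "finite X"
    obtain D where D0: "D \<ge> 0" and sD: "sens X Q = ereal D" and Dle: "\<And>u v. u \<in> X \<Longrightarrow> v \<in> X \<Longrightarrow> norm (Q u - Q v) \<le> D"
      and Dpos: "D > 0 \<Longrightarrow> \<exists>u\<in>X. \<exists>v\<in>X. Q u \<noteq> Q v"
      using sens_fin[OF fX Xne, of Q] by blast
    define mu where "mu = avgQ Q n x"
    define A where "A = Q ` X"
    have A: "finite A" "A \<noteq> {}" using fX Xne by (auto simp: A_def)
    have muK: "mu \<in> closure (convex hull A)" using avgK[OF x] by (simp add: mu_def K_def A_def)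
    have Dmu: "norm (a - mu) \<le> D" if aA: "a \<in> A" for a
    proof -
      obtain u where u: "u \<in> X" "a = Q u" using aA unfolding A_def by blast
      have "a - mu = (1 / real n) *\<^sub>R (\<Sum>i<n. Q u - Q (x i))"
      proof -
        have c: "(\<Sum>i<n. Q u) = real n *\<^sub>R Q u" by (simp add: sum_constant_scaleR del: sum_constant)
        show ?thesis using n by (simp add: u mu_def avgQ_def sum_subtractf scaleR_diff_right c del: sum_constant)
      qed
      then have "norm (a - mu) = (1 / real n) * norm (\<Sum>i<n. Q u - Q (x i))" using n by simp
      also have "\<dots> \<le> (1 / real n) * (\<Sum>i<n. norm (Q u - Q (x i)))"
        using n by (intro mult_left_mono norm_sum) auto
      also have "\<dots> \<le> (1 / real n) * (\<Sum>i<n. D)"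
        using n x u by (intro mult_left_mono sum_mono Dle) auto
      also have "\<dots> = D" using n by simp
      finally show ?thesis .
    qed
    define I where "I = (\<integral>\<^sup>+y. ennreal (norm (closest_point K y - mu) ^ 2) \<partial>gauss_measure mu \<sigma>)"
    have acc: "ennreal t * I \<le> ennreal (ln (real (card A)) + t^2 * \<sigma>^2 * D^2 / 2)" if "t > 0" for t
      unfolding I_def K_def A_def[symmetric] by (rule acc2[OF \<sigma> A that muK Dmu])
    have LHS: "(\<integral>\<^sup>+ y. ennreal (norm (y - avgQ Q n x) ^ 2 / real CARD('m)) \<partial>(M x)) = I * ennreal (1 / real CARD('m))"
    proof -
      have [measurable]: "closest_point K \<in> borel_measurable borel" by (rule cp_meas[OF K])
      have "(\<integral>\<^sup>+ y. ennreal (norm (y - avgQ Q n x) ^ 2 / real CARD('m)) \<partial>(M x))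
         = (\<integral>\<^sup>+ y. ennreal (norm (closest_point K y - mu) ^ 2) * ennreal (1 / real CARD('m)) \<partial>gauss_measure mu \<sigma>)"
        unfolding M_eq mu_def[symmetric]
        by (subst nn_int_proj[OF K]) (auto simp: ennreal_mult[symmetric])
      also have "\<dots> = I * ennreal (1 / real CARD('m))"
        unfolding I_def by (rule nn_integral_multc) measurable
      finally show ?thesis .
    qed
    have Ibound: "I \<le> ennreal (\<sigma> * D * sqrt (2 * ln (real (card X))))"
    proof (cases "D = 0")
      case True
      then have "A = {mu}" using Dmu A by fastforce
      then have "ennreal 1 * I \<le> ennreal (ln (real (card A)) + 1^2 * \<sigma>^2 * D^2 / 2)" using acc[of 1] by simp
      then have "I = 0" using True \<open>A = {mu}\<close> by simp
      then show ?thesis by simp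
    next
      case False
      then have Dp: "D > 0" using D0 by simp
      then obtain u v where uv: "u \<in> X" "v \<in> X" "Q u \<noteq> Q v" using Dpos by blast
      have "{Q u, Q v} \<subseteq> A" using uv by (auto simp: A_def)
      then have "card {Q u, Q v} \<le> card A" using A by (intro card_mono) auto
      then have cA2: "card A \<ge> 2" using uv by simp
      have cAX: "card A \<le> card X" unfolding A_def using fX by (rule card_image_le)
      define L where "L = ln (real (card A))"
      have Lpos: "L > 0" unfolding L_def using cA2 by simp
      have LX: "L \<le> ln (real (card X))" unfolding L_def using cA2 cAX by simp
      define t where "t = sqrt (2 * L) / (\<sigma> * D)"
      have tpos: "t > 0" unfolding t_def using Lpos \<sigma> Dp by simp
      have tt: "t^2 * \<sigma>^2 * D^2 / 2 = L"
        unfolding t_def using Lpos \<sigma> Dp by (simp add: power_divide power_mult_distrib)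
      have "ennreal t * I \<le> ennreal (2 * L)" using acc[OF tpos] tt by (simp add: L_def)
      then have "ennreal (1 / t) * (ennreal t * I) \<le> ennreal (1 / t) * ennreal (2 * L)"
        by (rule mult_left_mono) simp
      then have "I \<le> ennreal (2 * L / t)"
        using tpos Lpos by (simp add: ennreal_mult[symmetric] mult.assoc[symmetric])
      also have "2 * L / t = \<sigma> * D * sqrt (2 * L)"
      proof -
        have "sqrt (2 * L) * sqrt (2 * L) = 2 * L" using Lpos by simp
        then show ?thesis unfolding t_def using Lpos \<sigma> Dp by (simp add: field_simps)
      qed
      also have "\<sigma> * D * sqrt (2 * L) \<le> \<sigma> * D * sqrt (2 * ln (real (card X)))"
        using LX \<sigma> Dp by (intro mult_left_mono) auto
      finally show ?thesis by (simp add: ennreal_leI)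
    qed
    show "(\<integral>\<^sup>+ y. ennreal (norm (y - avgQ Q n x) ^ 2 / real CARD('m)) \<partial>(M x))
              \<le> ennreal (\<sigma> * real_of_ereal (sens X Q) * sqrt (2 * ln (real (card X))) / real CARD('m))"
    proof -
      have "I * ennreal (1 / real CARD('m)) \<le> ennreal (\<sigma> * D * sqrt (2 * ln (real (card X)))) * ennreal (1 / real CARD('m))"
        by (rule mult_right_mono[OF Ibound]) simp
      also have "\<dots> = ennreal (\<sigma> * D * sqrt (2 * ln (real (card X))) / real CARD('m))"
      proof -
        have "card X \<ge> 1" using fX Xne by (simp add: Suc_le_eq card_gt_0_iff)
        then have "0 \<le> \<sigma> * D * sqrt (2 * ln (real (card X)))" using \<sigma> D0 by simp
        then show ?thesis by (simp add: ennreal_mult[symmetric])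
      qed
      finally show ?thesis unfolding LHS sD by simp
    qed
  qed
  show ?thesis using part1 part2 part3 by blast
qed

end
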